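(* In the setting described in the context (node-symmetric conflict graph $G$, channel states in $\{0,1\}$, $q_J=q_K$ whenever $G_J\cong G_K$), if all primaries use the strategy $\mathrm{SP}_{sym}$, then every node $a\in V$ is offered by a primary with the same probability $\alpha_a$, and consequently the expected payoff a primary obtains at a node where it offers its channel is the same for every node of $G$.
   Context: Model. $l$ primaries; $m$ secondaries at each node of $G=(V,E)$, integers $1\le m<l$. Each primary's channel state vector $J\in\{0,1\}^V$ (1 = available) has probability $q_J$, i.i.d. across primaries, with $q_{(0,\dots,0)}>0$; $G_J$ is the subgraph induced by $\{a:J_a=1\}$. Constants $c,v$; $g_1$ strictly increasing continuous, $f_1=g_1^{-1}$. At each node the $\min(Y,m)$ lowest-penalty offers among the $Y$ offers with penalty $\le v$ are sold (ties uniformly random); a sale at penalty $x$ earns $f_1(x)-c$. $G$ is node symmetric: for all $a,b$ there is an automorphism $F$ of $G$ with $F(a)=b$. $\mathrm{SP}_{sym}$: with state vector $J\ne0$, a primary selects each maximum (largest-cardinality) independent set of $G_J$ with equal probability and no other set; at a selected node $a$ it draws its penalty from the CDF $\phi^{(a)}$ with $\phi^{(a)}(x)=0$ for $x<g_1(p_a)$, $\frac1{\alpha_a}w^{-1}\!\left(\frac{f_1(x)-p_a}{f_1(x)-c}\right)$ for $g_1(p_a)\le x\le v$, $1$ for $x>v$, where $\alpha_a$ is the probability the selection rule offers at $a$, $p_a=c+(f_1(v)-c)W(\alpha_a)$, $w(x)=\sum_{i=m}^{l-1}\binom{l-1}{i}x^i(1-x)^{l-1-i}$, $W=1-w$. 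*)

theory Defs
  imports "HOL-Analysis.Analysis"
begin

(* A channel state vector J in {0,1}^V is represented by the set of nodes a with J_a = 1;
   the zero vector is the empty set. *)

definition simple_graph :: "('v \<Rightarrow> 'v \<Rightarrow> bool) \<Rightarrow> bool" where
  "simple_graph E \<longleftrightarrow> (\<forall>x y. E x y \<longrightarrow> E y x) \<and> (\<forall>x. \<not> E x x)"

definition graph_automorphism :: "('v \<Rightarrow> 'v \<Rightarrow> bool) \<Rightarrow> ('v \<Rightarrow> 'v) \<Rightarrow> bool" where
  "graph_automorphism E F \<longleftrightarrow> bij F \<and> (\<forall>x y. E x y \<longleftrightarrow> E (F x) (F y))"

definition node_symmetric :: "('v \<Rightarrow> 'v \<Rightarrow> bool) \<Rightarrow> bool" where
  "node_symmetric E \<longleftrightarrow> (\<forall>a b. \<exists>F. graph_automorphism E F \<and> F a = b)"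

definition induced_iso :: "('v \<Rightarrow> 'v \<Rightarrow> bool) \<Rightarrow> 'v set \<Rightarrow> 'v set \<Rightarrow> bool" where
  "induced_iso E J K \<longleftrightarrow>
     (\<exists>h. bij_betw h J K \<and> (\<forall>x\<in>J. \<forall>y\<in>J. E x y \<longleftrightarrow> E (h x) (h y)))"

definition indep_set :: "('v \<Rightarrow> 'v \<Rightarrow> bool) \<Rightarrow> 'v set \<Rightarrow> 'v set \<Rightarrow> bool" where
  "indep_set E J S \<longleftrightarrow> S \<subseteq> J \<and> (\<forall>x\<in>S. \<forall>y\<in>S. \<not> E x y)"

definition max_indep_sets :: "('v \<Rightarrow> 'v \<Rightarrow> bool) \<Rightarrow> 'v set \<Rightarrow> 'v set set" where
  "max_indep_sets E J = {S. indep_set E J S \<and> (\<forall>T. indep_set E J T \<longrightarrow> card T \<le> card S)}"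

(* alpha_a: probability that a primary using the selection rule of SP_sym offers at node a.
   With state J \<noteq> 0 it picks a maximum independent set of G_J uniformly at random;
   with J = 0 it offers nowhere. *)
definition offer_prob :: "('v::finite \<Rightarrow> 'v \<Rightarrow> bool) \<Rightarrow> ('v set \<Rightarrow> real) \<Rightarrow> 'v \<Rightarrow> real" where
  "offer_prob E q a =
     (\<Sum>J\<in>{J. J \<noteq> {}}. q J * real (card {S\<in>max_indep_sets E J. a \<in> S})
                                 / real (card (max_indep_sets E J)))"

definition wfun :: "nat \<Rightarrow> nat \<Rightarrow> real \<Rightarrow> real" where
  "wfun l m x = (\<Sum>i=m..l-1. real ((l-1) choose i) * x ^ i * (1 - x) ^ (l-1-i))"

definition Wfun :: "nat \<Rightarrow> nat \<Rightarrow> real \<Rightarrow> real" where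
  "Wfun l m x = 1 - wfun l m x"

definition winv :: "nat \<Rightarrow> nat \<Rightarrow> real \<Rightarrow> real" where
  "winv l m = the_inv_into {0..1} (wfun l m)"

definition sp_p :: "nat \<Rightarrow> nat \<Rightarrow> real \<Rightarrow> real \<Rightarrow> (real \<Rightarrow> real) \<Rightarrow> real \<Rightarrow> real" where
  "sp_p l m c v f1 \<alpha> = c + (f1 v - c) * Wfun l m \<alpha>"

definition sp_phi :: "nat \<Rightarrow> nat \<Rightarrow> real \<Rightarrow> real \<Rightarrow> (real \<Rightarrow> real) \<Rightarrow> (real \<Rightarrow> real)
                      \<Rightarrow> real \<Rightarrow> real \<Rightarrow> real" where
  "sp_phi l m c v f1 g1 \<alpha> x =
     (let p = sp_p l m c v f1 \<alpha> in
      if x < g1 p then 0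
      else if x \<le> v then (1 / \<alpha>) * winv l m ((f1 x - p) / (f1 x - c))
      else 1)"

(* Probability that an offer of a given primary at a node (with penalty x \<le> v) is sold,
   when each of the other l-1 primaries independently offers at that node with a penalty
   strictly lower than x with probability pL and with penalty equal to x with
   probability pT. k = number of strictly lower offers, t = number of tied offers;
   the min(Y,m) lowest offers are sold with ties broken uniformly at random, so the
   own offer is sold with probability min(1, max(0,m-k)/(t+1)). *)
definition sale_prob :: "nat \<Rightarrow> nat \<Rightarrow> real \<Rightarrow> real \<Rightarrow> real" where
  "sale_prob l m pL pT =
     (\<Sum>k\<le>l-1. \<Sum>t\<le>l-1-k.
        real (fact (l-1)) / (real (fact k) * real (fact t) * real (fact (l-1-k-t)))
        * pL ^ k * pT ^ t * (1 - pL - pT) ^ (l-1-k-t)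
        * min 1 (real (m - k) / real (t + 1)))"

(* Payoff of a primary offering at a node with penalty x, when every other primary offers
   there with probability alpha and draws its penalty from the CDF Phi;
   a sale at penalty x earns f1(x) - c; offers with penalty > v are not sold. *)
definition penalty_payoff :: "nat \<Rightarrow> nat \<Rightarrow> real \<Rightarrow> real \<Rightarrow> (real \<Rightarrow> real)
                      \<Rightarrow> real \<Rightarrow> (real \<Rightarrow> real) \<Rightarrow> real \<Rightarrow> real" where
  "penalty_payoff l m c v f1 \<alpha> Phi x =
     (if x \<le> v then
        (f1 x - c) * sale_prob l m (\<alpha> * Lim (at_left x) Phi)
                                   (\<alpha> * (Phi x - Lim (at_left x) Phi))
      else 0)"

(* Expected payoff a primary obtains at node a where it offers its channel, when all
   primaries use SP_sym: its own penalty has CDF phi^(a), and every other primary offers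
   at a with probability alpha_a and penalty CDF phi^(a). *)
definition node_payoff :: "('v::finite \<Rightarrow> 'v \<Rightarrow> bool) \<Rightarrow> ('v set \<Rightarrow> real) \<Rightarrow> nat \<Rightarrow> nat
                      \<Rightarrow> real \<Rightarrow> real \<Rightarrow> (real \<Rightarrow> real) \<Rightarrow> (real \<Rightarrow> real) \<Rightarrow> 'v \<Rightarrow> real" where
  "node_payoff E q l m c v f1 g1 a =
     (let \<alpha> = offer_prob E q a; Phi = sp_phi l m c v f1 g1 \<alpha> in
      integral\<^sup>L (interval_measure Phi) (penalty_payoff l m c v f1 \<alpha> Phi))"

end

theory Submission
  imports Defs
begin

lemma aut_inv:
  assumes "graph_automorphism E F"
  shows "graph_automorphism E (inv F)"
proof -
  have b: "bij F" using assms unfolding graph_automorphism_def by blast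
  have "E x y \<longleftrightarrow> E (inv F x) (inv F y)" for x y
    using assms unfolding graph_automorphism_def
    by (metis b bij_inv_eq_iff)
  then show ?thesis using b bij_imp_bij_inv unfolding graph_automorphism_def by blast
qed

lemma mis_sub:
  assumes "graph_automorphism E F" "S \<in> max_indep_sets E J"
  shows "F ` S \<in> max_indep_sets E (F ` J)"
proof -
  have b: "bij F" and e: "\<And>x y. E x y \<longleftrightarrow> E (F x) (F y)"
    using assms(1) unfolding graph_automorphism_def by blast+
  have inj: "inj F" using b bij_is_inj by blast
  have S: "indep_set E J S" "\<And>T. indep_set E J T \<Longrightarrow> card T \<le> card S"
    using assms(2) by (auto simp: max_indep_sets_def)
  have i1: "indep_set E (F ` J) (F ` S)"
    using S(1) unfolding indep_set_def by (auto simp: e[symmetric])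
  have "card T \<le> card (F ` S)" if T: "indep_set E (F ` J) T" for T
  proof -
    have ei: "\<And>x y. E x y \<longleftrightarrow> E (inv F x) (inv F y)"
      using aut_inv[OF assms(1)] unfolding graph_automorphism_def by blast
    have "inv F ` T \<subseteq> J" using T inj unfolding indep_set_def by auto
    moreover have "\<forall>x\<in>inv F ` T. \<forall>y\<in>inv F ` T. \<not> E x y"
      using T unfolding indep_set_def by (auto simp: ei[symmetric] inv_f_f[OF inj])
    ultimately have "indep_set E J (inv F ` T)" by (simp add: indep_set_def)
    hence "card (inv F ` T) \<le> card S" using S(2) by blast
    moreover have "card (inv F ` T) = card T"
      using b by (intro card_image inj_on_subset[OF bij_is_inj[OF bij_imp_bij_inv[OF b]]]) simp
    moreover have "card (F ` S) = card S" using inj by (simp add: card_image inj_on_subset)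
    ultimately show ?thesis by simp
  qed
  thus ?thesis using i1 by (simp add: max_indep_sets_def)
qed

lemma mis_eq:
  assumes "graph_automorphism E F"
  shows "max_indep_sets E (F ` J) = (`) F ` max_indep_sets E J"
proof
  show "(`) F ` max_indep_sets E J \<subseteq> max_indep_sets E (F ` J)"
    using mis_sub[OF assms] by blast
  have b: "bij F" using assms unfolding graph_automorphism_def by blast
  show "max_indep_sets E (F ` J) \<subseteq> (`) F ` max_indep_sets E J"
  proof
    fix T assume T: "T \<in> max_indep_sets E (F ` J)"
    have "inv F ` T \<in> max_indep_sets E (inv F ` F ` J)"
      using mis_sub[OF aut_inv[OF assms] T] .
    moreover have "inv F ` F ` J = J" using b by (simp add: bij_is_inj image_image)
    moreover have "T = F ` (inv F ` T)" using b by (simp add: bij_is_surj image_image surj_f_inv_f)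
    ultimately show "T \<in> (`) F ` max_indep_sets E J" by auto
  qed
qed

lemma offer_aut:
  fixes E :: "'v::finite \<Rightarrow> 'v \<Rightarrow> bool"
  assumes "graph_automorphism E F"
    and qi: "\<And>J K. induced_iso E J K \<Longrightarrow> q J = q K"
  shows "offer_prob E q (F a) = offer_prob E q a"
proof -
  have b: "bij F" and e: "\<And>x y. E x y \<longleftrightarrow> E (F x) (F y)"
    using assms(1) unfolding graph_automorphism_def by blast+
  have inj: "inj F" using b bij_is_inj by blast
  have injI: "inj ((`) F)" using inj by (simp add: inj_image_eq_iff inj_def)
  define g where "g J = q J * real (card {S\<in>max_indep_sets E J. F a \<in> S})
                                 / real (card (max_indep_sets E J))" for J
  have bb: "bij_betw ((`) F) {J. J \<noteq> {}} {J. J \<noteq> {}}"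
    unfolding bij_betw_def
  proof
    show "inj_on ((`) F) {J. J \<noteq> {}}" using injI inj_on_subset by blast
    show "(`) F ` {J. J \<noteq> {}} = {J. J \<noteq> {}}"
    proof (intro equalityI subsetI)
      fix K :: "'v set" assume "K \<in> (`) F ` {J. J \<noteq> {}}"
      thus "K \<in> {J. J \<noteq> {}}" by auto
    next
      fix K :: "'v set" assume "K \<in> {J. J \<noteq> {}}"
      hence "inv F ` K \<noteq> {}" by simp
      moreover have "K = F ` (inv F ` K)" using b by (simp add: bij_is_surj image_image surj_f_inv_f)
      ultimately show "K \<in> (`) F ` {J. J \<noteq> {}}" by blast
    qed
  qed
  have "offer_prob E q (F a) = sum g {J. J \<noteq> {}}" by (simp add: offer_prob_def g_def)
  also have "\<dots> = sum (g \<circ> (`) F) {J. J \<noteq> {}}"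
    using sum.reindex_bij_betw[OF bb, of g] by simp
  also have "\<dots> = offer_prob E q a"
    unfolding offer_prob_def
  proof (rule sum.cong, simp)
    fix J :: "'v set"
    have "induced_iso E J (F ` J)" unfolding induced_iso_def
      using inj by (intro exI[of _ F]) (auto simp: bij_betw_def inj_on_subset[OF inj subset_UNIV] e[symmetric])
    hence qq: "q (F ` J) = q J" using qi by (metis)
    have M: "max_indep_sets E (F ` J) = (`) F ` max_indep_sets E J" by (rule mis_eq[OF assms(1)])
    have c1: "card (max_indep_sets E (F ` J)) = card (max_indep_sets E J)"
      unfolding M using injI by (simp add: card_image inj_on_subset)
    have "{S\<in>max_indep_sets E (F ` J). F a \<in> S} = (`) F ` {S\<in>max_indep_sets E J. a \<in> S}"
      unfolding M using inj by (auto simp: inj_image_mem_iff inj_eq)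
    hence c2: "card {S\<in>max_indep_sets E (F ` J). F a \<in> S} = card {S\<in>max_indep_sets E J. a \<in> S}"
      using injI by (simp add: card_image inj_on_subset)
    show "(g \<circ> (`) F) J = q J * real (card {S \<in> max_indep_sets E J. a \<in> S}) /
          real (card (max_indep_sets E J))"
      by (simp add: g_def qq c1 c2)
  qed
  finally show ?thesis .
qed

theorem lemma12:
  fixes E :: "'v::finite \<Rightarrow> 'v \<Rightarrow> bool"
    and q :: "'v set \<Rightarrow> real"
    and l m :: nat
    and c v :: real
    and f1 g1 :: "real \<Rightarrow> real"
  assumes "simple_graph E"
    and "node_symmetric E"
    and "1 \<le> m" and "m < l"
    and "\<And>J. q J \<ge> 0" and "(\<Sum>J\<in>UNIV. q J) = 1" and "q {} > 0"
    and "\<And>J K. induced_iso E J K \<Longrightarrow> q J = q K"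
    and "strict_mono g1" and "continuous_on UNIV g1"
    and "\<And>x. f1 (g1 x) = x"
  shows "(\<forall>a b. offer_prob E q a = offer_prob E q b)
       \<and> (\<forall>a b. node_payoff E q l m c v f1 g1 a = node_payoff E q l m c v f1 g1 b)"
proof -
  have A: "offer_prob E q a = offer_prob E q b" for a b
  proof -
    obtain F where F: "graph_automorphism E F" "F a = b"
      using assms(2) unfolding node_symmetric_def by blast
    have "offer_prob E q (F a) = offer_prob E q a"
      by (rule offer_aut[OF F(1)]) (rule assms(8))
    thus ?thesis using F(2) by simp
  qed
  moreover have "node_payoff E q l m c v f1 g1 a = node_payoff E q l m c v f1 g1 b" for a b
    unfolding node_payoff_def using A[of a b] by simp
  ultimately show ?thesis by blast
qed

end
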